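(* Let $\langle S,L,\tau,\ell\rangle$ be a labelled Markov chain and $P\in\mathcal{P}_\tau$. The following are equivalent: (1) $P$ is optimal, i.e. $\gamma_P(s,t)=\delta_\tau(s,t)$ for all $s,t\in S$; (2) $\Gamma_P(\delta_\tau)=\delta_\tau$; (3) $\Gamma_P(\delta_\tau)\le\delta_\tau$ pointwise.
   Context: Labelled Markov chain: finite $S$, finite $L$, $\tau:S\to\mathcal{D}(S)$, $\ell:S\to L$. $\Omega(\mu,\nu)$ = couplings. $S^2_\Delta=\{(s,s)\}$, $S^2_1=\{(s,t)\mid\ell(s)\ne\ell(t)\}$. $\mathcal{P}_\tau$ = set of policies $P:S\times S\to\mathcal{D}(S\times S)$ with $P(s,t)\in\Omega(\tau(s),\tau(t))$ for $(s,t)\notin S^2_1$ and $P(s,t)$ the point mass at $(s,t)$ for $(s,t)\in S^2_1$. For $d:S\times S\to[0,1]$, $\Gamma_P(d)(s,t)=1$ if $(s,t)\in S^2_1$ and $\Gamma_P(d)(s,t)=\sum_{u,v}P(s,t)(u,v)\,d(u,v)$ otherwise; $\gamma_P$ is the least fixed point of $\Gamma_P$ (equal to the probability of reaching $S^2_1$ from $(s,t)$ in the Markov chain $\langle S\times S,P\rangle$). $\delta_\tau$ is the least fixed point of $\Delta_\tau$, where $\Delta_\tau(d)(s,t)=1$ if $\ell(s)\ne\ell(t)$ and $\inf_{\omega\in\Omega(\tau(s),\tau(t))}\sum_{u,v}\omega(u,v)d(u,v)$ otherwise; it is known that $\delta_\tau=\min_{P\in\mathcal{P}_\tau}\gamma_P$.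 *)

theory Defs
  imports "HOL-Probability.Probability"
begin

text \<open>A labelled Markov chain is given by a finite state type 's, a finite label type 'l,
  a transition function tau :: 's => 's pmf and a labelling ell :: 's => 'l.\<close>

definition couplings :: "'s pmf \<Rightarrow> 's pmf \<Rightarrow> ('s \<times> 's) pmf set" where
  "couplings \<mu> \<nu> = {\<omega>. map_pmf fst \<omega> = \<mu> \<and> map_pmf snd \<omega> = \<nu>}"

definition diag_pairs :: "('s \<times> 's) set" where
  "diag_pairs = {(s, s) | s. True}"

definition S1 :: "('s \<Rightarrow> 'l) \<Rightarrow> ('s \<times> 's) set" where
  "S1 ell = {(s, t). ell s \<noteq> ell t}"

definition policies :: "('s \<Rightarrow> 's pmf) \<Rightarrow> ('s \<Rightarrow> 'l) \<Rightarrow> ('s \<times> 's \<Rightarrow> ('s \<times> 's) pmf) set" where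
  "policies tau ell = {P. \<forall>s t.
      ((s, t) \<notin> S1 ell \<longrightarrow> P (s, t) \<in> couplings (tau s) (tau t)) \<and>
      ((s, t) \<in> S1 ell \<longrightarrow> P (s, t) = return_pmf (s, t))}"

text \<open>Least fixed point of an operator on the complete lattice of functions
  X => [0,1] (pointwise order), via the Knaster--Tarski formula:
  pointwise infimum of all pre-fixed points in that lattice.\<close>
definition lfp01 :: "(('a \<Rightarrow> real) \<Rightarrow> ('a \<Rightarrow> real)) \<Rightarrow> 'a \<Rightarrow> real" where
  "lfp01 F = (\<lambda>x. Inf {d x | d. (\<forall>y. 0 \<le> d y \<and> d y \<le> 1) \<and> (\<forall>y. F d y \<le> d y)})"

definition Gamma :: "('s::finite \<Rightarrow> 'l) \<Rightarrow> ('s \<times> 's \<Rightarrow> ('s \<times> 's) pmf)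
      \<Rightarrow> ('s \<times> 's \<Rightarrow> real) \<Rightarrow> ('s \<times> 's \<Rightarrow> real)" where
  "Gamma ell P d = (\<lambda>(s, t). if (s, t) \<in> S1 ell then 1
      else (\<Sum>(u, v)\<in>UNIV. pmf (P (s, t)) (u, v) * d (u, v)))"

definition gamma :: "('s::finite \<Rightarrow> 'l) \<Rightarrow> ('s \<times> 's \<Rightarrow> ('s \<times> 's) pmf) \<Rightarrow> ('s \<times> 's \<Rightarrow> real)" where
  "gamma ell P = lfp01 (Gamma ell P)"

definition Delta :: "('s::finite \<Rightarrow> 's pmf) \<Rightarrow> ('s \<Rightarrow> 'l)
      \<Rightarrow> ('s \<times> 's \<Rightarrow> real) \<Rightarrow> ('s \<times> 's \<Rightarrow> real)" where
  "Delta tau ell d = (\<lambda>(s, t). if ell s \<noteq> ell t then 1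
      else (INF \<omega>\<in>couplings (tau s) (tau t). \<Sum>(u, v)\<in>UNIV. pmf \<omega> (u, v) * d (u, v)))"

definition delta :: "('s::finite \<Rightarrow> 's pmf) \<Rightarrow> ('s \<Rightarrow> 'l) \<Rightarrow> ('s \<times> 's \<Rightarrow> real)" where
  "delta tau ell = lfp01 (Delta tau ell)"

definition optimal :: "('s::finite \<Rightarrow> 's pmf) \<Rightarrow> ('s \<Rightarrow> 'l) \<Rightarrow> ('s \<times> 's \<Rightarrow> ('s \<times> 's) pmf) \<Rightarrow> bool" where
  "optimal tau ell P \<longleftrightarrow> (\<forall>s t. gamma ell P (s, t) = delta tau ell (s, t))"

end

theory Submission
  imports Defs
begin

definition in01 :: "('a \<Rightarrow> real) \<Rightarrow> bool" where
  "in01 d \<longleftrightarrow> (\<forall>y. 0 \<le> d y \<and> d y \<le> 1)"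

locale mono01 =
  fixes F :: "('a \<Rightarrow> real) \<Rightarrow> ('a \<Rightarrow> real)"
  assumes monoF: "\<And>d e. in01 d \<Longrightarrow> in01 e \<Longrightarrow> (\<forall>x. d x \<le> e x) \<Longrightarrow> F d x \<le> F e x"
    and rangeF: "\<And>d. in01 d \<Longrightarrow> in01 (F d)"
begin

definition D where "D = {d. in01 d \<and> (\<forall>y. F d y \<le> d y)}"

lemma lfp01_alt: "lfp01 F x = Inf ((\<lambda>d. d x) ` D)"
  unfolding lfp01_def D_def in01_def by (rule arg_cong[where f=Inf]) auto

lemma one_in: "(\<lambda>_. 1) \<in> D"
proof -
  have "in01 (\<lambda>_::'a. 1::real)" by (simp add: in01_def)
  then show ?thesis using rangeF unfolding D_def in01_def by auto
qed

lemma bdd: "bdd_below ((\<lambda>d. d x) ` D)"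
  unfolding D_def in01_def bdd_below_def by auto

lemma lower: "in01 d \<Longrightarrow> (\<forall>y. F d y \<le> d y) \<Longrightarrow> lfp01 F x \<le> d x"
  unfolding lfp01_alt by (rule cInf_lower) (use bdd D_def in auto)

lemma in01_lfp: "in01 (lfp01 F)"
  unfolding in01_def
proof
  fix y
  have "0 \<le> lfp01 F y" unfolding lfp01_alt
  proof (rule cInf_greatest)
    show "(\<lambda>d. d y) ` D \<noteq> {}" using one_in by blast
  qed (auto simp: D_def in01_def)
  moreover have "lfp01 F y \<le> 1" using lower[of "\<lambda>_. 1"] one_in D_def by auto
  ultimately show "0 \<le> lfp01 F y \<and> lfp01 F y \<le> 1" by simp
qed

lemma pre: "F (lfp01 F) y \<le> lfp01 F y"
  unfolding lfp01_alt[of y]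
proof (rule cInf_greatest)
  show "(\<lambda>d. d y) ` D \<noteq> {}" using one_in by auto
  fix z assume "z \<in> (\<lambda>d. d y) ` D"
  then obtain d where d: "d \<in> D" "z = d y" by auto
  have "F (lfp01 F) y \<le> F d y"
    by (rule monoF) (use in01_lfp d lower D_def in auto)
  also have "\<dots> \<le> d y" using d D_def by auto
  finally show "F (lfp01 F) y \<le> z" using d by simp
qed

lemma fixed: "F (lfp01 F) = lfp01 F"
proof -
  have "in01 (F (lfp01 F))" using rangeF in01_lfp by auto
  moreover have "\<forall>y. F (F (lfp01 F)) y \<le> F (lfp01 F) y"
    using monoF[OF rangeF[OF in01_lfp] in01_lfp] pre by auto
  ultimately have "lfp01 F y \<le> F (lfp01 F) y" for y using lower by blast
  then show ?thesis using pre by (intro ext) (meson order_antisym)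
qed

end

lemma wsum_eq: "(\<Sum>(u, v)\<in>UNIV. pmf \<omega> (u, v) * d (u, v)) = (\<Sum>x\<in>UNIV. pmf \<omega> x * (d x::real))"
  by (rule sum.cong) auto

lemma wsum_ge0: "in01 d \<Longrightarrow> 0 \<le> (\<Sum>(u, v)\<in>(UNIV::('s::finite\<times>'s) set). pmf \<omega> (u, v) * d (u, v))"
  unfolding wsum_eq in01_def by (intro sum_nonneg) auto

lemma wsum_le1: "in01 d \<Longrightarrow> (\<Sum>(u, v)\<in>(UNIV::('s::finite\<times>'s) set). pmf \<omega> (u, v) * d (u, v)) \<le> 1"
proof -
  assume a: "in01 d"
  have "(\<Sum>x\<in>(UNIV::('s\<times>'s) set). pmf \<omega> x * d x) \<le> (\<Sum>x\<in>UNIV. pmf \<omega> x)"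
  proof (intro sum_mono)
    fix x have "0 \<le> d x \<and> d x \<le> 1" using a unfolding in01_def by blast
    then show "pmf \<omega> x * d x \<le> pmf \<omega> x" by (simp add: mult_left_le)
  qed
  also have "\<dots> = 1" by (rule sum_pmf_eq_1) auto
  finally show ?thesis unfolding wsum_eq .
qed

lemma wsum_mono: "in01 d \<Longrightarrow> in01 e \<Longrightarrow> (\<forall>x. d x \<le> e x) \<Longrightarrow>
   (\<Sum>(u, v)\<in>(UNIV::('s::finite\<times>'s) set). pmf \<omega> (u, v) * d (u, v))
   \<le> (\<Sum>(u, v)\<in>UNIV. pmf \<omega> (u, v) * e (u, v))"
  unfolding wsum_eq by (intro sum_mono mult_left_mono) auto

lemma couplings_ne: "pair_pmf a b \<in> couplings a b"
  unfolding couplings_def by (simp add: map_fst_pair_pmf map_snd_pair_pmf)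

lemma Gamma_mono01: "P \<in> policies tau ell \<Longrightarrow> mono01 (Gamma ell P)"
  unfolding mono01_def
proof (intro conjI allI impI)
  fix d e :: "'a \<times> 'a \<Rightarrow> real" and x
  assume a: "in01 d" "in01 e" "\<forall>x. d x \<le> e x"
  show "Gamma ell P d x \<le> Gamma ell P e x"
    unfolding Gamma_def using wsum_mono[OF a, of "P x"] by (cases x) auto
next
  fix d :: "'a \<times> 'a \<Rightarrow> real"
  assume a: "in01 d"
  show "in01 (Gamma ell P d)"
    unfolding in01_def
  proof
    fix y :: "'a \<times> 'a"
    show "0 \<le> Gamma ell P d y \<and> Gamma ell P d y \<le> 1"
      unfolding Gamma_def using wsum_ge0[OF a, of "P y"] wsum_le1[OF a, of "P y"]
      by (cases y) auto
  qed
qed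

lemma Delta_mono01: "mono01 (Delta tau ell)"
  unfolding mono01_def
proof (intro conjI allI impI)
  fix d e :: "'a \<times> 'a \<Rightarrow> real" and x :: "'a \<times> 'a"
  assume a: "in01 d" "in01 e" "\<forall>x. d x \<le> e x"
  obtain s t where x: "x = (s, t)" by (cases x)
  have "(INF \<omega>\<in>couplings (tau s) (tau t). \<Sum>(u, v)\<in>UNIV. pmf \<omega> (u, v) * d (u, v))
     \<le> (INF \<omega>\<in>couplings (tau s) (tau t). \<Sum>(u, v)\<in>UNIV. pmf \<omega> (u, v) * e (u, v))"
  proof (rule cINF_mono)
    show "couplings (tau s) (tau t) \<noteq> {}" using couplings_ne by auto
    show "bdd_below ((\<lambda>\<omega>. \<Sum>(u, v)\<in>UNIV. pmf \<omega> (u, v) * d (u, v)) ` couplings (tau s) (tau t))"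
      using wsum_ge0[OF a(1)] by (intro bdd_belowI[of _ 0]) auto
    fix m assume "m \<in> couplings (tau s) (tau t)"
    then show "\<exists>n\<in>couplings (tau s) (tau t). (\<Sum>(u, v)\<in>UNIV. pmf n (u, v) * d (u, v))
        \<le> (\<Sum>(u, v)\<in>UNIV. pmf m (u, v) * e (u, v))"
      using wsum_mono[OF a] by blast
  qed
  then show "Delta tau ell d x \<le> Delta tau ell e x"
    unfolding Delta_def x by auto
next
  fix d :: "'a \<times> 'a \<Rightarrow> real"
  assume a: "in01 d"
  have "0 \<le> (INF \<omega>\<in>couplings (tau s) (tau t). \<Sum>(u, v)\<in>UNIV. pmf \<omega> (u, v) * d (u, v))
      \<and> (INF \<omega>\<in>couplings (tau s) (tau t). \<Sum>(u, v)\<in>UNIV. pmf \<omega> (u, v) * d (u, v)) \<le> 1" for s t :: 'a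
  proof
    show "0 \<le> (INF \<omega>\<in>couplings (tau s) (tau t). \<Sum>(u, v)\<in>UNIV. pmf \<omega> (u, v) * d (u, v))"
      using couplings_ne wsum_ge0[OF a] by (intro cINF_greatest) auto
    have "(INF \<omega>\<in>couplings (tau s) (tau t). \<Sum>(u, v)\<in>UNIV. pmf \<omega> (u, v) * d (u, v))
        \<le> (\<Sum>(u, v)\<in>UNIV. pmf (pair_pmf (tau s) (tau t)) (u, v) * d (u, v))"
      using couplings_ne wsum_ge0[OF a] by (intro cINF_lower bdd_belowI[of _ 0]) auto
    also have "\<dots> \<le> 1" by (rule wsum_le1[OF a])
    finally show "(INF \<omega>\<in>couplings (tau s) (tau t). \<Sum>(u, v)\<in>UNIV. pmf \<omega> (u, v) * d (u, v)) \<le> 1" .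
  qed
  then show "in01 (Delta tau ell d)"
    unfolding Delta_def in01_def by auto
qed

lemma Delta_le_Gamma:
  assumes "P \<in> policies tau ell" "in01 d"
  shows "Delta tau ell d x \<le> Gamma ell P d x"
proof -
  obtain s t where x: "x = (s, t)" by (cases x)
  show ?thesis
  proof (cases "ell s = ell t")
    case True
    then have c: "P (s, t) \<in> couplings (tau s) (tau t)"
      using assms(1) unfolding policies_def S1_def by auto
    have "(INF \<omega>\<in>couplings (tau s) (tau t). \<Sum>(u, v)\<in>UNIV. pmf \<omega> (u, v) * d (u, v))
        \<le> (\<Sum>(u, v)\<in>UNIV. pmf (P (s, t)) (u, v) * d (u, v))"
      using c wsum_ge0[OF assms(2)] by (intro cINF_lower bdd_belowI[of _ 0]) auto
    then show ?thesis using True unfolding Delta_def Gamma_def x S1_def by auto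
  next
    case False
    then show ?thesis unfolding Delta_def Gamma_def x S1_def by auto
  qed
qed

theorem mainTheorem14:
  fixes tau :: "'s::finite \<Rightarrow> 's pmf" and ell :: "'s \<Rightarrow> 'l::finite"
    and P :: "'s \<times> 's \<Rightarrow> ('s \<times> 's) pmf"
  assumes "P \<in> policies tau ell"
  shows "(optimal tau ell P \<longleftrightarrow> Gamma ell P (delta tau ell) = delta tau ell)
    \<and> (Gamma ell P (delta tau ell) = delta tau ell
         \<longleftrightarrow> (\<forall>s t. Gamma ell P (delta tau ell) (s, t) \<le> delta tau ell (s, t)))"
proof -
  interpret G: mono01 "Gamma ell P" using Gamma_mono01[OF assms] .
  interpret D: mono01 "Delta tau ell" by (rule Delta_mono01)
  have dfix: "Delta tau ell (delta tau ell) = delta tau ell"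
    unfolding delta_def by (rule D.fixed)
  have gfix: "Gamma ell P (gamma ell P) = gamma ell P"
    unfolding gamma_def by (rule G.fixed)
  have din: "in01 (delta tau ell)" unfolding delta_def by (rule D.in01_lfp)
  have gin: "in01 (gamma ell P)" unfolding gamma_def by (rule G.in01_lfp)
  have dg: "delta tau ell x \<le> gamma ell P x" for x
    unfolding delta_def
  proof (rule D.lower[OF gin])
    show "\<forall>y. Delta tau ell (gamma ell P) y \<le> gamma ell P y"
      using Delta_le_Gamma[OF assms gin] gfix by metis
  qed
  have ge: "delta tau ell x \<le> Gamma ell P (delta tau ell) x" for x
    using Delta_le_Gamma[OF assms din, of x] dfix by simp
  have 3: "(\<forall>s t. Gamma ell P (delta tau ell) (s, t) \<le> delta tau ell (s, t)) \<longleftrightarrow>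
       (\<forall>x. Gamma ell P (delta tau ell) x \<le> delta tau ell x)" by auto
  have 32: "Gamma ell P (delta tau ell) = delta tau ell" if "\<forall>x. Gamma ell P (delta tau ell) x \<le> delta tau ell x"
    using that ge by (intro ext) (meson order_antisym)
  have 31: "gamma ell P = delta tau ell" if "\<forall>x. Gamma ell P (delta tau ell) x \<le> delta tau ell x"
  proof (intro ext order_antisym)
    fix x show "gamma ell P x \<le> delta tau ell x"
      unfolding gamma_def using G.lower[OF din that] by simp
    show "delta tau ell x \<le> gamma ell P x" by (rule dg)
  qed
  have opt: "optimal tau ell P \<longleftrightarrow> gamma ell P = delta tau ell"
    unfolding optimal_def by auto
  show ?thesis
    unfolding opt 3
    using 31 32 gfix by auto
qed

end
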